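(* Let $\Sigma$ be a Horn sequent $W,\Gamma,!\Delta\vdash Z$. If $\Sigma$ has a cut-free derivation in propositional linear logic (which can only use the rules I, L$\otimes$, R$\otimes$, L$\multimap$, L$\multimap\oplus$, L$\oplus$, L!, W!, C! listed in the context), then $\Sigma$ is derivable in Horn Linear Logic $\mathbf{HLL}$.
   Context: Positive literals are propositional variables. A simple product is a tensor product $q_1\otimes\cdots\otimes q_k$ ($k\ge 1$) of positive literals; $\otimes$ and $\oplus$ are treated as commutative and associative, so simple products correspond to nonempty finite multisets of literals, and $X\cong Y$ means $X,Y$ represent the same multiset. A Horn implication is a formula $X\multimap Y$ and a $\oplus$-Horn implication is $X\multimap(Y_1\oplus Y_2)$, where $X,Y,Y_1,Y_2$ are simple products. A Horn sequent is a sequent $W,\Gamma,!\Delta\vdash Z$ where $W,Z$ are simple products and $\Gamma,\Delta$ are finite multisets of Horn and $\oplus$-Horn implications ($!\Delta$ denotes $\{!A: A\in\Delta\}$). The linear logic rules that can occur in cut-free derivations of Horn sequents are: I: $X\vdash X$; L$\otimes$: from $\Sigma,X,Y\vdash Z$ infer $\Sigma,X\otimes Y\vdash Z$; R$\otimes$: from $\Sigma_1\vdash Z_1$ and $\Sigma_2\vdash Z_2$ infer $\Sigma_1,\Sigma_2\vdash Z_1\otimes Z_2$; L$\multimap$: from $\Sigma_1\vdash X$ and $Y,\Sigma_2\vdash Z$ infer $\Sigma_1,X\multimap Y,\Sigma_2\vdash Z$; L$\multimap\oplus$: from $\Sigma_1\vdash X$ and $(Y_1\oplus Y_2),\Sigma_2\vdash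 Z$ infer $\Sigma_1,X\multimap(Y_1\oplus Y_2),\Sigma_2\vdash Z$; L$\oplus$: from $\Sigma,Y_1\vdash Z$ and $\Sigma,Y_2\vdash Z$ infer $\Sigma,Y_1\oplus Y_2\vdash Z$; L!: from $\Sigma,A\vdash Z$ infer $\Sigma,!A\vdash Z$; W!: from $\Sigma\vdash Z$ infer $\Sigma,!A\vdash Z$; C!: from $\Sigma,!A,!A\vdash Z$ infer $\Sigma,!A\vdash Z$. $\mathbf{HLL}$ is the calculus on sequents $X,\Gamma,!\Delta\vdash Z$ ($X,Z$ simple products, $\Gamma,\Delta$ multisets of Horn/$\oplus$-Horn implications, and in the conclusion of a rule $(U\otimes V)$ in the antecedent may be identified with $U,V$) with rules: I: $X\vdash X$; L$\otimes$: from $X,\Gamma,!\Delta\vdash Z$ infer $Y,\Gamma,!\Delta\vdash Z$ where $X\cong Y$; H: $X,\,X\multimap Y\vdash Y$; M: from $X,\Gamma,!\Delta\vdash Y$ infer $(X\otimes V),\Gamma,!\Delta\vdash (Y\otimes V)$; $\oplus$-H: from $(Y_1\otimes V),\Gamma,!\Delta\vdash Z$ and $(Y_2\otimes V),\Gamma,!\Delta\vdash Z$ infer $(X\otimes V),\Gamma,X\multimap(Y_1\oplus Y_2),!\Delta\vdash Z$; L!: from $X,\Gamma,A,!\Delta\vdash Z$ infer $X,\Gamma,!A,!\Delta\vdash Z$; W!: from $X,\Gamma,!\Delta\vdash Z$ infer $X,\Gamma,!A,!\Delta\vdash Z$; C!: from $X,\Gamma,!A,!A,!\Delta\vdash Z$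 infer $X,\Gamma,!A,!\Delta\vdash Z$; Cut: from $W,\Gamma_1,!\Delta_1\vdash U$ and $U,\Gamma_2,!\Delta_2\vdash Z$ infer $W,\Gamma_1,\Gamma_2,!\Delta_1,!\Delta_2\vdash Z$. Here $A$ ranges over Horn and $\oplus$-Horn implications. *)

theory Defs
  imports "HOL-Library.Multiset"
begin

text \<open>Formulas of the Horn fragment, modulo associativity/commutativity of the tensor:
  a simple product is represented by the (nonempty) multiset of its literals, so
  the tensor of two simple products is multiset union.
  Prod X        : the simple product X
  Plus Y1 Y2    : Y1 (+) Y2
  Imp X Y       : X -o Y              (Horn implication)
  ImpPlus X Y1 Y2 : X -o (Y1 (+) Y2)  (plus-Horn implication)
  Bang A        : !A\<close>
datatype 'a fm =
    Prod "'a multiset"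
  | Plus "'a multiset" "'a multiset"
  | Imp "'a multiset" "'a multiset"
  | ImpPlus "'a multiset" "'a multiset" "'a multiset"
  | Bang "'a fm"

definition simple_product :: "'a multiset \<Rightarrow> bool" where
  "simple_product X \<longleftrightarrow> X \<noteq> {#}"

definition horn_impl :: "'a fm \<Rightarrow> bool" where
  "horn_impl A \<longleftrightarrow>
     (\<exists>X Y. A = Imp X Y \<and> simple_product X \<and> simple_product Y) \<or>
     (\<exists>X Y1 Y2. A = ImpPlus X Y1 Y2 \<and> simple_product X \<and> simple_product Y1 \<and> simple_product Y2)"

text \<open>Horn sequent W, Gamma, !Delta |- Z (Delta given without the bangs).\<close>
definition horn_sequent :: "'a multiset \<Rightarrow> 'a fm multiset \<Rightarrow> 'a fm multiset \<Rightarrow> 'a multiset \<Rightarrow> bool" where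
  "horn_sequent W \<Gamma> \<Delta> Z \<longleftrightarrow> simple_product W \<and> simple_product Z \<and>
     (\<forall>A\<in>#\<Gamma>. horn_impl A) \<and> (\<forall>A\<in>#\<Delta>. horn_impl A)"

inductive ll :: "'a fm multiset \<Rightarrow> 'a multiset \<Rightarrow> bool" where
  I: "simple_product X \<Longrightarrow> ll {#Prod X#} X"
| LTens: "ll (add_mset (Prod X) (add_mset (Prod Y) \<Sigma>)) Z \<Longrightarrow> simple_product X \<Longrightarrow> simple_product Y
          \<Longrightarrow> ll (add_mset (Prod (X + Y)) \<Sigma>) Z"
| RTens: "ll \<Sigma>1 Z1 \<Longrightarrow> ll \<Sigma>2 Z2 \<Longrightarrow> ll (\<Sigma>1 + \<Sigma>2) (Z1 + Z2)"
| LImp: "ll \<Sigma>1 X \<Longrightarrow> ll (add_mset (Prod Y) \<Sigma>2) Z \<Longrightarrow> ll (\<Sigma>1 + add_mset (Imp X Y) \<Sigma>2) Z"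
| LImpPlus: "ll \<Sigma>1 X \<Longrightarrow> ll (add_mset (Plus Y1 Y2) \<Sigma>2) Z
          \<Longrightarrow> ll (\<Sigma>1 + add_mset (ImpPlus X Y1 Y2) \<Sigma>2) Z"
| LPlus: "ll (add_mset (Prod Y1) \<Sigma>) Z \<Longrightarrow> ll (add_mset (Prod Y2) \<Sigma>) Z
          \<Longrightarrow> ll (add_mset (Plus Y1 Y2) \<Sigma>) Z"
| LBang: "ll (add_mset A \<Sigma>) Z \<Longrightarrow> ll (add_mset (Bang A) \<Sigma>) Z"
| WBang: "ll \<Sigma> Z \<Longrightarrow> ll (add_mset (Bang A) \<Sigma>) Z"
| CBang: "ll (add_mset (Bang A) (add_mset (Bang A) \<Sigma>)) Z \<Longrightarrow> ll (add_mset (Bang A) \<Sigma>) Z"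

text \<open>The rule L-tensor (X \<cong> Y) is the identity in the multiset representation.
  V in rules M and plus-H is a (possibly empty) context product.\<close>
inductive hll :: "'a multiset \<Rightarrow> 'a fm multiset \<Rightarrow> 'a fm multiset \<Rightarrow> 'a multiset \<Rightarrow> bool" where
  I: "simple_product X \<Longrightarrow> hll X {#} {#} X"
| LTens: "hll X \<Gamma> \<Delta> Z \<Longrightarrow> X = Y \<Longrightarrow> hll Y \<Gamma> \<Delta> Z"
| H: "simple_product X \<Longrightarrow> simple_product Y \<Longrightarrow> hll X {#Imp X Y#} {#} Y"
| M: "hll X \<Gamma> \<Delta> Y \<Longrightarrow> hll (X + V) \<Gamma> \<Delta> (Y + V)"
| PlusH: "horn_impl (ImpPlus X Y1 Y2) \<Longrightarrow> hll (Y1 + V) \<Gamma> \<Delta> Z \<Longrightarrow> hll (Y2 + V) \<Gamma> \<Delta> Z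
          \<Longrightarrow> hll (X + V) (add_mset (ImpPlus X Y1 Y2) \<Gamma>) \<Delta> Z"
| LBang: "horn_impl A \<Longrightarrow> hll X (add_mset A \<Gamma>) \<Delta> Z \<Longrightarrow> hll X \<Gamma> (add_mset A \<Delta>) Z"
| WBang: "horn_impl A \<Longrightarrow> hll X \<Gamma> \<Delta> Z \<Longrightarrow> hll X \<Gamma> (add_mset A \<Delta>) Z"
| CBang: "horn_impl A \<Longrightarrow> hll X \<Gamma> (add_mset A (add_mset A \<Delta>)) Z \<Longrightarrow> hll X \<Gamma> (add_mset A \<Delta>) Z"
| Cut: "hll W \<Gamma>1 \<Delta>1 U \<Longrightarrow> hll U \<Gamma>2 \<Delta>2 Z \<Longrightarrow> hll W (\<Gamma>1 + \<Gamma>2) (\<Delta>1 + \<Delta>2) Z"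

end

theory Submission
  imports Defs
begin

definition RR :: "'a fm \<Rightarrow> 'a fm \<Rightarrow> bool" where
  "RR A B = (case A of Plus Y1 Y2 \<Rightarrow> B = Prod Y1 \<or> B = Prod Y2 | _ \<Rightarrow> B = A)"

definition good :: "'a fm \<Rightarrow> bool" where
  "good A \<longleftrightarrow> (\<exists>X. A = Prod X) \<or> (\<exists>Y1 Y2. A = Plus Y1 Y2) \<or> horn_impl A
     \<or> (\<exists>B. A = Bang B \<and> horn_impl B)"

fun pr :: "'a fm \<Rightarrow> 'a multiset" where
  "pr (Prod X) = X"
| "pr _ = {#}"

fun isG :: "'a fm \<Rightarrow> bool" where
  "isG (Imp _ _) = True"
| "isG (ImpPlus _ _ _) = True"
| "isG _ = False"

fun isB :: "'a fm \<Rightarrow> bool" where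
  "isB (Bang _) = True"
| "isB _ = False"

fun ub :: "'a fm \<Rightarrow> 'a fm" where
  "ub (Bang B) = B"
| "ub A = A"

definition PP :: "'a fm multiset \<Rightarrow> 'a multiset" where
  "PP S = sum_mset (image_mset pr S)"
definition GG :: "'a fm multiset \<Rightarrow> 'a fm multiset" where
  "GG S = filter_mset isG S"
definition DD :: "'a fm multiset \<Rightarrow> 'a fm multiset" where
  "DD S = image_mset ub (filter_mset isB S)"

lemma rel_split:
  "rel_mset R (M1 + M2) N \<Longrightarrow> \<exists>N1 N2. N = N1 + N2 \<and> rel_mset R M1 N1 \<and> rel_mset R M2 N2"
proof (induction M1 arbitrary: N)
  case empty
  then show ?case by (intro exI[of _ "{#}"] exI[of _ N]) (auto simp: rel_mset_Zero)
next
  case (add a M1)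
  from msed_rel_invL[of R a "M1 + M2" N] add.prems obtain N' b where
    "N = add_mset b N'" "R a b" "rel_mset R (M1 + M2) N'" by auto
  with add.IH obtain N1 N2 where "N' = N1 + N2" "rel_mset R M1 N1" "rel_mset R M2 N2" by blast
  then show ?case using \<open>N = add_mset b N'\<close> \<open>R a b\<close>
    by (intro exI[of _ "add_mset b N1"] exI[of _ N2]) (auto simp: rel_mset_Plus)
qed

lemma rel_refl: "(\<forall>a\<in>#M. R a a) \<Longrightarrow> rel_mset R M M"
  by (induction M) (auto simp: rel_mset_Zero rel_mset_Plus)

lemma comb_tens:
  assumes "hll A1 G1 D1 Z1" "hll A2 G2 D2 Z2"
  shows "hll (A1+A2) (G1+G2) (D1+D2) (Z1+Z2)"
proof -
  have a: "hll (A1+A2) G1 D1 (Z1+A2)" using hll.M[OF assms(1)] .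
  have b: "hll (Z1+A2) G2 D2 (Z2+Z1)" using hll.M[OF assms(2), of Z1] by (simp add: add.commute)
  show ?thesis using hll.Cut[OF a b] by (simp add: add.commute)
qed

lemma comb_imp:
  assumes "hll P1 G1 D1 X" "simple_product X" "simple_product Y" "hll (Y+P2) G2 D2 Z"
  shows "hll (P1+P2) (G1 + add_mset (Imp X Y) G2) (D1+D2) Z"
proof -
  have "hll P1 (G1 + {#Imp X Y#}) (D1 + {#}) Y" using hll.Cut[OF assms(1) hll.H[OF assms(2,3)]] .
  then have "hll (P1+P2) (G1 + {#Imp X Y#}) D1 (Y+P2)" using hll.M by simp
  from hll.Cut[OF this assms(4)] show ?thesis by simp
qed

lemma comb_impplus:
  assumes "hll P1 G1 D1 X" "horn_impl (ImpPlus X Y1 Y2)"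
    "hll (Y1+P2) G2 D2 Z" "hll (Y2+P2) G2 D2 Z"
  shows "hll (P1+P2) (G1 + add_mset (ImpPlus X Y1 Y2) G2) (D1+D2) Z"
proof -
  have a: "hll (P1+P2) G1 D1 (X+P2)" using hll.M[OF assms(1)] .
  have b: "hll (X+P2) (add_mset (ImpPlus X Y1 Y2) G2) D2 Z"
    using hll.PlusH[OF assms(2-4)] .
  from hll.Cut[OF a b] show ?thesis .
qed

lemma horn_impl_simps[simp]:
  "\<not> horn_impl (Bang A)" "\<not> horn_impl (Prod X)" "\<not> horn_impl (Plus Y1 Y2)"
  by (auto simp: horn_impl_def)

lemma RR_simps[simp]:
  "RR (Prod X) B = (B = Prod X)"
  "RR (Plus Y1 Y2) B = (B = Prod Y1 \<or> B = Prod Y2)"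
  "RR (Imp X Y) B = (B = Imp X Y)"
  "RR (ImpPlus X Y1 Y2) B = (B = ImpPlus X Y1 Y2)"
  "RR (Bang A) B = (B = Bang A)"
  by (auto simp: RR_def)

lemma rel_add_inv:
  assumes "rel_mset RR (add_mset a M) N"
  shows "\<exists>N1 b. N = add_mset b N1 \<and> RR a b \<and> rel_mset RR M N1"
  using msed_rel_invL[OF assms] .

lemma main:
  "ll S Z \<Longrightarrow> (\<forall>A\<in>#S. good A) \<Longrightarrow> rel_mset RR S S' \<Longrightarrow> hll (PP S') (GG S') (DD S') Z"
proof (induction arbitrary: S' rule: ll.induct)
  case (I X)
  then obtain N1 b where "S' = add_mset b N1" "b = Prod X" "N1 = {#}"
    using rel_add_inv[of "Prod X" "{#}" S'] by auto
  then show ?case using I by (auto simp: PP_def GG_def DD_def intro: hll.I)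
next
  case (LTens X Y \<Sigma> Z)
  then obtain N1 where S': "S' = add_mset (Prod (X+Y)) N1" "rel_mset RR \<Sigma> N1"
    using rel_add_inv[of "Prod (X+Y)" \<Sigma> S'] by auto
  have "rel_mset RR (add_mset (Prod X) (add_mset (Prod Y) \<Sigma>)) (add_mset (Prod X) (add_mset (Prod Y) N1))"
    using S' by (auto intro!: rel_mset_Plus)
  moreover have "\<forall>A\<in>#add_mset (Prod X) (add_mset (Prod Y) \<Sigma>). good A" using LTens.prems
    by (auto simp: good_def)
  ultimately have "hll (PP (add_mset (Prod X) (add_mset (Prod Y) N1))) (GG (add_mset (Prod X) (add_mset (Prod Y) N1)))
     (DD (add_mset (Prod X) (add_mset (Prod Y) N1))) Z" using LTens.IH by blast
  then show ?case using S' by (simp add: PP_def GG_def DD_def add.assoc)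
next
  case (RTens \<Sigma>1 Z1 \<Sigma>2 Z2)
  then obtain N1 N2 where "S' = N1 + N2" "rel_mset RR \<Sigma>1 N1" "rel_mset RR \<Sigma>2 N2"
    using rel_split by blast
  with RTens have "hll (PP N1) (GG N1) (DD N1) Z1" "hll (PP N2) (GG N2) (DD N2) Z2" by auto
  from comb_tens[OF this] show ?case using \<open>S' = N1 + N2\<close> by (simp add: PP_def GG_def DD_def)
next
  case (LImp \<Sigma>1 X Y \<Sigma>2 Z)
  then obtain N1 N2 where "S' = N1 + N2" "rel_mset RR \<Sigma>1 N1" and r2: "rel_mset RR (add_mset (Imp X Y) \<Sigma>2) N2"
    using rel_split by blast
  from rel_add_inv[OF r2] obtain N3 where N2: "N2 = add_mset (Imp X Y) N3" "rel_mset RR \<Sigma>2 N3" by auto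
  have gi: "good (Imp X Y)" using LImp.prems by auto
  hence sp: "simple_product X" "simple_product Y" by (auto simp: good_def horn_impl_def)
  have h1: "hll (PP N1) (GG N1) (DD N1) X" using LImp \<open>rel_mset RR \<Sigma>1 N1\<close> by auto
  have "rel_mset RR (add_mset (Prod Y) \<Sigma>2) (add_mset (Prod Y) N3)" using N2 by (auto intro!: rel_mset_Plus)
  moreover have "\<forall>A\<in>#add_mset (Prod Y) \<Sigma>2. good A" using LImp.prems by (auto simp: good_def)
  ultimately have h2: "hll (Y + PP N3) (GG N3) (DD N3) Z" using LImp.IH(2)
    by (fastforce simp: PP_def GG_def DD_def)
  from comb_imp[OF h1 sp h2] show ?case using \<open>S' = N1 + N2\<close> N2 by (simp add: PP_def GG_def DD_def)
next
  case (LImpPlus \<Sigma>1 X Y1 Y2 \<Sigma>2 Z)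
  then obtain N1 N2 where "S' = N1 + N2" "rel_mset RR \<Sigma>1 N1" and r2: "rel_mset RR (add_mset (ImpPlus X Y1 Y2) \<Sigma>2) N2"
    using rel_split by blast
  from rel_add_inv[OF r2] obtain N3 where N2: "N2 = add_mset (ImpPlus X Y1 Y2) N3" "rel_mset RR \<Sigma>2 N3" by auto
  have gi: "good (ImpPlus X Y1 Y2)" using LImpPlus.prems by auto
  hence hi: "horn_impl (ImpPlus X Y1 Y2)" by (auto simp: good_def)
  have h1: "hll (PP N1) (GG N1) (DD N1) X" using LImpPlus \<open>rel_mset RR \<Sigma>1 N1\<close> by auto
  have gd: "\<forall>A\<in>#add_mset (Plus Y1 Y2) \<Sigma>2. good A" using LImpPlus.prems by (auto simp: good_def)
  have "rel_mset RR (add_mset (Plus Y1 Y2) \<Sigma>2) (add_mset (Prod Y1) N3)" using N2 by (auto intro!: rel_mset_Plus)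
  with gd have h2: "hll (Y1 + PP N3) (GG N3) (DD N3) Z" using LImpPlus.IH(2)
    by (fastforce simp: PP_def GG_def DD_def)
  have "rel_mset RR (add_mset (Plus Y1 Y2) \<Sigma>2) (add_mset (Prod Y2) N3)" using N2 by (auto intro!: rel_mset_Plus)
  with gd have h3: "hll (Y2 + PP N3) (GG N3) (DD N3) Z" using LImpPlus.IH(2)
    by (fastforce simp: PP_def GG_def DD_def)
  from comb_impplus[OF h1 hi h2 h3] show ?case using \<open>S' = N1 + N2\<close> N2 by (simp add: PP_def GG_def DD_def)
next
  case (LPlus Y1 \<Sigma> Z Y2)
  from rel_add_inv[OF LPlus.prems(2)] obtain N1 b where
    S': "S' = add_mset b N1" "b = Prod Y1 \<or> b = Prod Y2" "rel_mset RR \<Sigma> N1" by auto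
  have g1: "\<forall>A\<in>#add_mset (Prod Y1) \<Sigma>. good A" "\<forall>A\<in>#add_mset (Prod Y2) \<Sigma>. good A"
    using LPlus.prems by (auto simp: good_def)
  from S'(2) show ?case
  proof
    assume "b = Prod Y1"
    moreover have "rel_mset RR (add_mset (Prod Y1) \<Sigma>) (add_mset (Prod Y1) N1)" using S' by (auto intro!: rel_mset_Plus)
    ultimately show ?case using LPlus.IH(1) g1 S' by auto
  next
    assume "b = Prod Y2"
    moreover have "rel_mset RR (add_mset (Prod Y2) \<Sigma>) (add_mset (Prod Y2) N1)" using S' by (auto intro!: rel_mset_Plus)
    ultimately show ?case using LPlus.IH(2) g1 S' by auto
  qed
next
  case (LBang A \<Sigma> Z)
  from rel_add_inv[OF LBang.prems(2)] obtain N1 where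
    S': "S' = add_mset (Bang A) N1" "rel_mset RR \<Sigma> N1" by auto
  have hA: "horn_impl A" using LBang.prems by (auto simp: good_def)
  hence RA: "RR A A" by (auto simp: horn_impl_def)
  have "rel_mset RR (add_mset A \<Sigma>) (add_mset A N1)" using S' RA by (auto intro!: rel_mset_Plus)
  moreover have "\<forall>B\<in>#add_mset A \<Sigma>. good B" using LBang.prems hA by (auto simp: good_def)
  ultimately have "hll (PP (add_mset A N1)) (GG (add_mset A N1)) (DD (add_mset A N1)) Z"
    using LBang.IH by blast
  moreover have "pr A = {#}" "isG A" "\<not> isB A" using hA by (auto simp: horn_impl_def)
  ultimately have "hll (PP N1) (add_mset A (GG N1)) (DD N1) Z" by (simp add: PP_def GG_def DD_def)
  from hll.LBang[OF hA this] show ?case using S' by (simp add: PP_def GG_def DD_def)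
next
  case (WBang \<Sigma> Z A)
  from rel_add_inv[OF WBang.prems(2)] obtain N1 where
    S': "S' = add_mset (Bang A) N1" "rel_mset RR \<Sigma> N1" by auto
  have hA: "horn_impl A" using WBang.prems by (auto simp: good_def)
  have "hll (PP N1) (GG N1) (DD N1) Z" using WBang S' by auto
  from hll.WBang[OF hA this] show ?case using S' by (simp add: PP_def GG_def DD_def)
next
  case (CBang A \<Sigma> Z)
  from rel_add_inv[OF CBang.prems(2)] obtain N1 where
    S': "S' = add_mset (Bang A) N1" "rel_mset RR \<Sigma> N1" by auto
  have hA: "horn_impl A" using CBang.prems by (auto simp: good_def)
  have "rel_mset RR (add_mset (Bang A) (add_mset (Bang A) \<Sigma>)) (add_mset (Bang A) (add_mset (Bang A) N1))"
    using S' by (auto intro!: rel_mset_Plus)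
  moreover have "\<forall>B\<in>#add_mset (Bang A) (add_mset (Bang A) \<Sigma>). good B" using CBang.prems by auto
  ultimately have "hll (PP (add_mset (Bang A) (add_mset (Bang A) N1))) (GG (add_mset (Bang A) (add_mset (Bang A) N1)))
     (DD (add_mset (Bang A) (add_mset (Bang A) N1))) Z" using CBang.IH by blast
  hence "hll (PP N1) (GG N1) (add_mset A (add_mset A (DD N1))) Z" by (simp add: PP_def GG_def DD_def)
  from hll.CBang[OF hA this] show ?case using S' by (simp add: PP_def GG_def DD_def)
qed

theorem theorem1:
  assumes "horn_sequent W \<Gamma> \<Delta> Z"
    and "ll (add_mset (Prod W) (\<Gamma> + image_mset Bang \<Delta>)) Z"
  shows "hll W \<Gamma> \<Delta> Z"
proof -
  let ?S = "add_mset (Prod W) (\<Gamma> + image_mset Bang \<Delta>)"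
  have hG: "\<forall>A\<in>#\<Gamma>. horn_impl A" and hD: "\<forall>A\<in>#\<Delta>. horn_impl A"
    using assms(1) by (auto simp: horn_sequent_def)
  have g: "\<forall>A\<in>#?S. good A" using hG hD by (auto simp: good_def)
  have rG: "\<forall>A\<in>#\<Gamma>. RR A A" using hG by (auto simp: horn_impl_def)
  have r: "rel_mset RR ?S ?S" by (rule rel_refl) (use rG in auto)
  from main[OF assms(2) g r] have h: "hll (PP ?S) (GG ?S) (DD ?S) Z" .
  moreover have "PP \<Gamma> = {#}" unfolding PP_def using hG
    by (induction \<Gamma>) (auto simp: horn_impl_def)
  moreover have "GG \<Gamma> = \<Gamma>" unfolding GG_def using hG
    by (induction \<Gamma>) (auto simp: horn_impl_def)
  moreover have "DD \<Gamma> = {#}" unfolding DD_def using hG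
    by (induction \<Gamma>) (auto simp: horn_impl_def)
  moreover have "image_mset ub (image_mset Bang \<Delta>) = \<Delta>" by (induction \<Delta>) auto
  moreover have "filter_mset isG (image_mset Bang \<Delta>) = {#}" by (induction \<Delta>) auto
  moreover have "filter_mset isB \<Gamma> = {#}" using hG by (induction \<Gamma>) (auto simp: horn_impl_def)
  moreover have "filter_mset isB (image_mset Bang \<Delta>) = image_mset Bang \<Delta>" by (induction \<Delta>) auto
  moreover have "sum_mset (image_mset pr (image_mset Bang \<Delta>)) = {#}" by (induction \<Delta>) auto
  ultimately have "PP ?S = W" "GG ?S = \<Gamma>" "DD ?S = \<Delta>"
    by (simp_all add: PP_def GG_def DD_def)
  with \<open>hll (PP ?S) (GG ?S) (DD ?S) Z\<close> show ?thesis by simp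
qed

end
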